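(* Under the assumptions (A0a) and (A1) stated in the context, the uniform Law of Large Numbers holds: \[ \lim_{T\to\infty} \sup_{\theta, z_0} \frac{1}{1+\|\theta\|} \left| \frac{1}{T}\int_0^T \bigl[f(\theta,\xi_t) - \bar f(\theta)\bigr]\, dt \right| = 0, \] where the supremum is over $\theta\in\mathbb{R}^d$ and initial conditions $\Phi_0 = z_0\in\Omega$.
   Context: Let $f\colon\mathbb{R}^d\times\mathbb{R}^m\to\mathbb{R}^d$ be continuous. The clock process $\Phi$ has $K$ entries $\Phi^i_t = \exp(2\pi j[\omega_i t+\phi_i])$ with positive frequencies $\omega_i$ and phases $\phi_i$; it solves $\frac{d}{dt}\Phi_t = W\Phi_t$ with $W = 2\pi j\,\mathrm{diag}(\omega_i)$ and evolves on a compact set $\Omega\subset\mathbb{C}^K$, with invariant (uniform) distribution $\pi$ on $\Omega$. Let $\xi^0_t = [\cos(2\pi[\omega_1 t+\phi_1]),\dots,\cos(2\pi[\omega_K t+\phi_K])]^\intercal$. (A0a): the probing signal is $\xi_t = G_0(\xi^0_t)$ for all $t$, where $G_0\colon\mathbb{R}^K\to\mathbb{R}^m$ is analytic with absolutely summable Taylor series coefficients for $G_0(\xi^0_t)$; equivalently $\xi_t = G(\Phi_t)$ with $G(z) = G_0((z+1/z)/2)$. The mean vector field is $\bar f(\theta) = \mathsf{E}[f(\theta,G(\Phi))]$ with $\Phi\sim\pi$. (A1): $f$ and $\bar f$ are Lipschitz: for a constant $L_f<\infty$, $\|\bar f(\theta')-\bar f(\theta)\|\le L_f\|\theta'-\theta\|$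 and $\|f(\theta',\xi)-f(\theta,\xi)\| + \|f(\theta,\xi')-f(\theta,\xi)\| \le L_f[\|\theta'-\theta\|+\|\xi'-\xi\|]$ for all $\theta,\theta'\in\mathbb{R}^d$, $\xi,\xi'\in\mathbb{R}^m$. *)

theory Defs
  imports "HOL-Analysis.Analysis" "HOL-Probability.Probability"
begin

text \<open>Clock process. Components indexed by a finite type 'k (K = CARD('k)).
  Flow of dPhi/dt = W Phi with W = 2 pi j diag(omega_i): z maps to exp(W t) z.\<close>
definition clock_flow :: "('k::finite \<Rightarrow> real) \<Rightarrow> real \<Rightarrow> complex^'k \<Rightarrow> complex^'k" where
  "clock_flow \<omega> t z = (\<chi> i. exp (2 * of_real pi * \<i> * of_real (\<omega> i * t)) * z$i)"

definition clock :: "('k::finite \<Rightarrow> real) \<Rightarrow> ('k \<Rightarrow> real) \<Rightarrow> real \<Rightarrow> complex^'k" where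
  "clock \<omega> \<phi> t = (\<chi> i. exp (2 * of_real pi * \<i> * of_real (\<omega> i * t + \<phi> i)))"

definition clock_set :: "('k::finite \<Rightarrow> real) \<Rightarrow> ('k \<Rightarrow> real) \<Rightarrow> (complex^'k) set" where
  "clock_set \<omega> \<phi> = closure (range (clock \<omega> \<phi>))"

text \<open>G(z) = G0((z + 1/z)/2); for z on Omega (unit-modulus entries) the argument is real.\<close>
definition G_of :: "(real^'k::finite \<Rightarrow> 'b) \<Rightarrow> complex^'k \<Rightarrow> 'b" where
  "G_of G0 z = G0 (\<chi> i. Re ((z$i + inverse (z$i)) / 2))"

definition monom_mi :: "real^'k::finite \<Rightarrow> ('k \<Rightarrow> nat) \<Rightarrow> real" where
  "monom_mi x \<alpha> = (\<Prod>i\<in>UNIV. (x$i) ^ (\<alpha> i))"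

definition real_analytic :: "(real^'k::finite \<Rightarrow> 'b::banach) \<Rightarrow> bool" where
  "real_analytic g \<longleftrightarrow> (\<forall>x0. \<exists>r>0. \<exists>a :: ('k \<Rightarrow> nat) \<Rightarrow> 'b.
      \<forall>x. (\<forall>i. \<bar>x$i - x0$i\<bar> < r) \<longrightarrow>
        (\<lambda>\<alpha>. norm (monom_mi (x - x0) \<alpha> *\<^sub>R a \<alpha>)) summable_on UNIV \<and>
        ((\<lambda>\<alpha>. monom_mi (x - x0) \<alpha> *\<^sub>R a \<alpha>) has_sum g x) UNIV)"

text \<open>The Taylor series of g at 0 has absolutely summable coefficients: the coefficients
  c of the power series representing g near 0 (unique, hence the Taylor coefficients)
  satisfy sum of norm (c alpha) < infinity.\<close>
definition taylor_abs_summable :: "(real^'k::finite \<Rightarrow> 'b::banach) \<Rightarrow> bool" where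
  "taylor_abs_summable g \<longleftrightarrow> (\<exists>r>0. \<exists>c :: ('k \<Rightarrow> nat) \<Rightarrow> 'b.
      (\<lambda>\<alpha>. norm (c \<alpha>)) summable_on UNIV \<and>
      (\<forall>x. (\<forall>i. \<bar>x$i\<bar> < r) \<longrightarrow> ((\<lambda>\<alpha>. monom_mi x \<alpha> *\<^sub>R c \<alpha>) has_sum g x) UNIV))"

end

theory Submission
  imports Defs
begin
lemma real_analytic_continuous:
  fixes g :: "real^'k::finite \<Rightarrow> 'b::banach"
  assumes "real_analytic g"
  shows "continuous_on UNIV g"
proof -
  have "isCont g x0" for x0
  proof -
    obtain r a where r: "r > 0" and ra: "\<And>x. (\<forall>i. \<bar>x$i - x0$i\<bar> < r) \<Longrightarrow>
        (\<lambda>\<alpha>. norm (monom_mi (x - x0) \<alpha> *\<^sub>R a \<alpha>)) summable_on UNIV \<and>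
        ((\<lambda>\<alpha>. monom_mi (x - x0) \<alpha> *\<^sub>R a \<alpha>) has_sum g x) UNIV"
      using assms unfolding real_analytic_def by metis
    define \<rho> where "\<rho> = r / 2"
    have \<rho>: "0 < \<rho>" "\<rho> < r" using r by (auto simp: \<rho>_def)
    define S where "S = {x. \<forall>i. \<bar>x$i - x0$i\<bar> \<le> \<rho>}"
    define y where "y = x0 + (\<chi> i. \<rho>)"
    define t where "t = (\<lambda>x \<alpha>. monom_mi (x - x0) \<alpha> *\<^sub>R a \<alpha>)"
    define M where "M = (\<lambda>\<alpha>. norm (t y \<alpha>))"
    have yM: "M summable_on UNIV" using ra[of y] \<rho> by (simp add: y_def M_def t_def)
    have bound: "norm (t x \<alpha>) \<le> M \<alpha>" if "x \<in> S" for x \<alpha>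
    proof -
      have "\<bar>monom_mi (x - x0) \<alpha>\<bar> \<le> monom_mi (y - x0) \<alpha>"
        unfolding monom_mi_def abs_prod
        using that \<rho> by (auto simp: S_def y_def power_abs intro!: prod_mono power_mono)
      then show ?thesis
        by (auto simp: M_def t_def intro!: mult_right_mono)
    qed
    have hs: "(t x has_sum g x) UNIV" if "x \<in> S" for x
    proof -
      have "\<forall>i. \<bar>x$i - x0$i\<bar> < r" using that \<rho> by (auto simp: S_def intro: le_less_trans)
      then show ?thesis using ra[of x] by (simp add: t_def)
    qed
    have ul: "uniform_limit S (\<lambda>F x. \<Sum>\<alpha>\<in>F. t x \<alpha>) g (finite_subsets_at_top UNIV)"
    proof (rule uniform_limitI)
      fix e :: real assume e: "e > 0"
      have "((\<lambda>F. sum M F) \<longlongrightarrow> infsum M UNIV) (finite_subsets_at_top UNIV)"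
        using infsum_tendsto[OF yM] .
      then have ev: "\<forall>\<^sub>F F in finite_subsets_at_top UNIV. dist (sum M F) (infsum M UNIV) < e"
        using e tendstoD by blast
      show "\<forall>\<^sub>F F in finite_subsets_at_top UNIV. \<forall>x\<in>S. dist (\<Sum>\<alpha>\<in>F. t x \<alpha>) (g x) < e"
      proof (rule eventually_mono[OF eventually_conj[OF ev eventually_finite_subsets_at_top_weakI]])
        fix F assume F: "dist (sum M F) (infsum M UNIV) < e \<and> finite F"
        show "\<forall>x\<in>S. dist (\<Sum>\<alpha>\<in>F. t x \<alpha>) (g x) < e"
        proof
          fix x assume x: "x \<in> S"
          have h1: "(t x has_sum (g x - sum (t x) F)) (UNIV - F)"
            using has_sum_Diff[OF hs[OF x] has_sum_finite[of F "t x"]] F by simp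
          have h2: "(M has_sum (infsum M UNIV - sum M F)) (UNIV - F)"
            using has_sum_Diff[OF has_sum_infsum[OF yM] has_sum_finite[of F M]] F by simp
          have "norm (g x - sum (t x) F) \<le> infsum M UNIV - sum M F"
            using norm_infsum_le[OF h1 h2] bound[OF x] by blast
          also have "\<dots> < e" using F by (simp add: dist_norm abs_less_iff)
          finally show "dist (\<Sum>\<alpha>\<in>F. t x \<alpha>) (g x) < e" by (simp add: dist_norm norm_minus_commute)
        qed
      qed simp
    qed
    have "continuous_on S g"
    proof (rule uniform_limit_theorem[OF _ ul])
      show "\<forall>\<^sub>F F in finite_subsets_at_top UNIV. continuous_on S (\<lambda>x. \<Sum>\<alpha>\<in>F. t x \<alpha>)"
        unfolding t_def monom_mi_def by (intro always_eventually allI continuous_intros)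
    qed simp
    moreover have "ball x0 \<rho> \<subseteq> S"
    proof
      fix x assume "x \<in> ball x0 \<rho>"
      then have "norm (x - x0) < \<rho>" by (simp add: dist_norm norm_minus_commute)
      moreover have "\<bar>(x - x0)$i\<bar> \<le> norm (x - x0)" for i by (rule component_le_norm_cart)
      ultimately show "x \<in> S" by (auto simp: S_def intro: order_trans less_imp_le)
    qed
    ultimately show ?thesis
      using \<rho> by (meson centre_in_ball continuous_on_interior interior_maximal open_ball subset_eq)

  qed
  then show ?thesis by (simp add: continuous_on_eq_continuous_at)
qed

definition torus :: "(complex^'k::finite) set" where
  "torus = {z. \<forall>i. norm (z$i) = 1}"

lemma closed_torus: "closed (torus :: (complex^'k::finite) set)"
  unfolding torus_def by (intro closed_Collect_all closed_Collect_eq continuous_intros)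

lemma bounded_torus: "bounded (torus :: (complex^'k::finite) set)"
proof -
  have "torus \<subseteq> cball (0::complex^'k) (real CARD('k))"
  proof
    fix z :: "complex^'k" assume "z \<in> torus"
    have "norm z \<le> (\<Sum>i\<in>UNIV. norm (z$i))"
      unfolding norm_vec_def by (rule L2_set_le_sum) auto
    moreover have "\<forall>i. norm (z$i) = 1" using \<open>z \<in> torus\<close> by (auto simp: torus_def)
    ultimately have "norm z \<le> (\<Sum>i\<in>UNIV. norm (z$i))" "\<forall>i. norm (z$i) = 1" by auto
    then show "z \<in> cball 0 (real CARD('k))" by simp
  qed
  then show ?thesis using bounded_cball bounded_subset by blast
qed

lemma continuous_clock_flow: "continuous_on UNIV (clock_flow \<omega> t)"
  unfolding clock_flow_def by (intro continuous_intros)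

lemma continuous_clock_flow_t: "continuous_on UNIV (\<lambda>t. clock_flow \<omega> t z)"
  unfolding clock_flow_def by (intro continuous_intros)

lemma clock_flow_clock: "clock_flow \<omega> s (clock \<omega> \<phi> t) = clock \<omega> \<phi> (t + s)"
  unfolding clock_flow_def clock_def
  by (simp add: vec_eq_iff exp_add[symmetric] algebra_simps)

lemma clock_flow_0_clock: "clock \<omega> \<phi> t = clock_flow \<omega> t (clock \<omega> \<phi> 0)"
  by (simp add: clock_flow_clock)

lemma clock_in_torus: "clock \<omega> \<phi> t \<in> torus"
  unfolding clock_def torus_def by (simp add: norm_exp_eq_Re)

lemma clock_set_torus: "clock_set \<omega> \<phi> \<subseteq> torus"
  unfolding clock_set_def using clock_in_torus closed_torus
  by (metis closure_minimal image_subsetI)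

lemma compact_clock_set: "compact (clock_set \<omega> \<phi>)"
  using clock_set_torus bounded_torus unfolding clock_set_def
  by (metis bounded_subset closed_closure compact_eq_bounded_closed clock_set_def)

lemma clock_set_nonempty: "clock \<omega> \<phi> 0 \<in> clock_set \<omega> \<phi>"
  unfolding clock_set_def by (simp add: closure_def)

lemma clock_flow_in: "z \<in> clock_set \<omega> \<phi> \<Longrightarrow> clock_flow \<omega> t z \<in> clock_set \<omega> \<phi>"
proof -
  assume z: "z \<in> clock_set \<omega> \<phi>"
  have "clock_flow \<omega> t ` closure (range (clock \<omega> \<phi>)) \<subseteq> closure (range (clock \<omega> \<phi>))"
  proof (rule image_closure_subset)
    show "continuous_on (closure (range (clock \<omega> \<phi>))) (clock_flow \<omega> t)"
      using continuous_clock_flow continuous_on_subset by blast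
    show "clock_flow \<omega> t ` range (clock \<omega> \<phi>) \<subseteq> closure (range (clock \<omega> \<phi>))"
      by (auto simp: clock_flow_clock intro: closure_subset[THEN subsetD])
  qed simp
  then show ?thesis using z unfolding clock_set_def by blast
qed

locale clk =
  fixes \<omega> \<phi> :: "'k::finite \<Rightarrow> real" and \<pi> :: "(complex^'k) measure"
  assumes prob: "prob_space \<pi>" and sets_\<pi>: "sets \<pi> = sets borel"
    and on\<Omega>: "emeasure \<pi> (clock_set \<omega> \<phi>) = 1"
    and inv: "\<forall>t. distr \<pi> \<pi> (clock_flow \<omega> t) = \<pi>"
begin

sublocale prob_space \<pi> by (rule prob)

abbreviation "\<Omega> \<equiv> clock_set \<omega> \<phi>"

lemma AE_\<Omega>: "AE z in \<pi>. z \<in> \<Omega>"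
proof (rule AE_prob_1)
  show "prob \<Omega> = 1" using on\<Omega> measure_eq_emeasure_eq_ennreal[of 1 \<pi> \<Omega>] by simp
qed
end

context clk begin

lemma meas: "continuous_on UNIV h \<Longrightarrow> h \<in> borel_measurable \<pi>"
proof -
  assume "continuous_on UNIV h"
  then have "h \<in> borel_measurable borel" by (rule borel_measurable_continuous_onI)
  then show ?thesis by (subst measurable_cong_sets[OF sets_\<pi> refl])
qed

lemma bdd_\<Omega>:
  fixes h :: "complex^'k \<Rightarrow> 'b::real_normed_vector"
  assumes "continuous_on UNIV h" shows "\<exists>B. \<forall>z\<in>\<Omega>. norm (h z) \<le> B"
proof -
  have "compact (h ` \<Omega>)"
    by (rule compact_continuous_image[OF continuous_on_subset[OF assms] compact_clock_set]) simp
  then have "bounded (h ` \<Omega>)" by (rule compact_imp_bounded)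
  then show ?thesis unfolding bounded_iff by auto
qed

lemma intg:
  fixes h :: "complex^'k \<Rightarrow> 'b::euclidean_space"
  assumes "continuous_on UNIV h" shows "integrable \<pi> h"
proof -
  obtain B where B: "\<forall>z\<in>\<Omega>. norm (h z) \<le> B" using bdd_\<Omega> assms by blast
  have "AE z in \<pi>. norm (h z) \<le> B" using AE_\<Omega> by eventually_elim (use B in blast)
  then show ?thesis
    by (rule integrable_const_bound) (rule meas[OF assms])
qed

lemma cont_t:
  fixes h :: "complex^'k \<Rightarrow> 'b::real_normed_vector"
  assumes "continuous_on UNIV h" shows "continuous_on S (\<lambda>t. h (clock_flow \<omega> t z))"
proof -
  have "continuous_on UNIV (\<lambda>t. h (clock_flow \<omega> t z))"
    by (rule continuous_on_compose2[OF assms continuous_clock_flow_t]) simp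
  then show ?thesis by (rule continuous_on_subset) simp
qed

lemma intg_t:
  fixes h :: "complex^'k \<Rightarrow> 'b::euclidean_space"
  assumes "continuous_on UNIV h" shows "(\<lambda>t. h (clock_flow \<omega> t z)) integrable_on {a..b}"
  by (rule integrable_continuous_interval) (rule cont_t[OF assms])


definition avg :: "(complex^'k \<Rightarrow> 'b::euclidean_space) \<Rightarrow> real \<Rightarrow> complex^'k \<Rightarrow> 'b" where
  "avg h T z = (1/T) *\<^sub>R integral {0..T} (\<lambda>t. h (clock_flow \<omega> t z))"

definition ET :: "(complex^'k \<Rightarrow> 'b::euclidean_space) \<Rightarrow> bool" where
  "ET h \<longleftrightarrow> (\<forall>e>0. eventually (\<lambda>T. \<forall>z\<in>\<Omega>. norm (avg h T z - integral\<^sup>L \<pi> h) \<le> e) at_top)"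

lemma ET_agree:
  fixes h k :: "complex^'k \<Rightarrow> 'b::euclidean_space"
  assumes ch: "continuous_on UNIV h" and ck: "continuous_on UNIV k"
    and eq: "\<forall>z\<in>\<Omega>. h z = k z" and E: "ET h"
  shows "ET k"
proof -
  have a: "avg h T z = avg k T z" if "z \<in> \<Omega>" for T z
    unfolding avg_def
    by (intro arg_cong[where f="\<lambda>x. (1/T) *\<^sub>R x"] integral_cong) (use eq clock_flow_in[OF that] in blast)
  have i: "integral\<^sup>L \<pi> h = integral\<^sup>L \<pi> k"
    by (rule integral_cong_AE[OF meas[OF ch] meas[OF ck]]) (use AE_\<Omega> eq in auto)
  show ?thesis unfolding ET_def
  proof (intro allI impI)
    fix e :: real assume "e > 0"
    then have "eventually (\<lambda>T. \<forall>z\<in>\<Omega>. norm (avg h T z - integral\<^sup>L \<pi> h) \<le> e) at_top"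
      using E unfolding ET_def by blast
    then show "eventually (\<lambda>T. \<forall>z\<in>\<Omega>. norm (avg k T z - integral\<^sup>L \<pi> k) \<le> e) at_top"
    proof (rule eventually_mono, intro ballI)
      fix T z assume "\<forall>z\<in>\<Omega>. norm (avg h T z - integral\<^sup>L \<pi> h) \<le> e" "z \<in> \<Omega>"
      then show "norm (avg k T z - integral\<^sup>L \<pi> k) \<le> e" using a[of z T] i by metis
    qed
  qed
qed

lemma ET_linear:
  fixes h :: "complex^'k \<Rightarrow> 'b::euclidean_space" and L :: "'b \<Rightarrow> 'c::euclidean_space"
  assumes L: "bounded_linear L" and ch: "continuous_on UNIV h" and E: "ET h"
  shows "ET (\<lambda>z. L (h z))"
proof -
  interpret L: bounded_linear L by fact
  obtain K where K: "K > 0" "\<And>x. norm (L x) \<le> norm x * K" using L.pos_bounded by blast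
  have a: "avg (\<lambda>z. L (h z)) T z = L (avg h T z)" for T z
  proof -
    have "integral {0..T} (\<lambda>t. L (h (clock_flow \<omega> t z))) = L (integral {0..T} (\<lambda>t. h (clock_flow \<omega> t z)))"
      using integral_linear[OF intg_t[OF ch] L] by (simp add: o_def)
    then show ?thesis unfolding avg_def by (simp add: L.scaleR)
  qed
  have i: "integral\<^sup>L \<pi> (\<lambda>z. L (h z)) = L (integral\<^sup>L \<pi> h)"
    by (rule integral_bounded_linear[OF L intg[OF ch]])
  show ?thesis unfolding ET_def
  proof (intro allI impI)
    fix e :: real assume e: "e > 0"
    then have "eventually (\<lambda>T. \<forall>z\<in>\<Omega>. norm (avg h T z - integral\<^sup>L \<pi> h) \<le> e / K) at_top"
      using E K unfolding ET_def by simp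
    then show "eventually (\<lambda>T. \<forall>z\<in>\<Omega>. norm (avg (\<lambda>z. L (h z)) T z - integral\<^sup>L \<pi> (\<lambda>z. L (h z))) \<le> e) at_top"
    proof (rule eventually_mono, intro ballI)
      fix T z assume H: "\<forall>z\<in>\<Omega>. norm (avg h T z - integral\<^sup>L \<pi> h) \<le> e / K" and z: "z \<in> \<Omega>"
      have "norm (avg (\<lambda>z. L (h z)) T z - integral\<^sup>L \<pi> (\<lambda>z. L (h z)))
          = norm (L (avg h T z - integral\<^sup>L \<pi> h))" by (simp only: a i L.diff)
      also have "\<dots> \<le> norm (avg h T z - integral\<^sup>L \<pi> h) * K" by (rule K(2))
      also have "\<dots> \<le> (e / K) * K" using H z K by (intro mult_right_mono) auto
      also have "\<dots> = e" using K by simp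
      finally show "norm (avg (\<lambda>z. L (h z)) T z - integral\<^sup>L \<pi> (\<lambda>z. L (h z))) \<le> e" .
    qed
  qed
qed

lemma abel2: "((a::'b::ab_group_add) + b) - (c + d) = (a - c) + (b - d)"
  by (simp add: algebra_simps)

lemma ET_add:
  fixes h k :: "complex^'k \<Rightarrow> 'b::euclidean_space"
  assumes ch: "continuous_on UNIV h" and ck: "continuous_on UNIV k" and Eh: "ET h" and Ek: "ET k"
  shows "ET (\<lambda>z. h z + k z)"
proof -
  have a: "avg (\<lambda>z. h z + k z) T z = avg h T z + avg k T z" for T z
    unfolding avg_def
    by (simp add: Henstock_Kurzweil_Integration.integral_add[OF intg_t[OF ch] intg_t[OF ck]] scaleR_add_right)
  have i: "integral\<^sup>L \<pi> (\<lambda>z. h z + k z) = integral\<^sup>L \<pi> h + integral\<^sup>L \<pi> k"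
    by (rule Bochner_Integration.integral_add[OF intg[OF ch] intg[OF ck]])
  show ?thesis unfolding ET_def
  proof (intro allI impI)
    fix e :: real assume e: "e > 0"
    have "eventually (\<lambda>T. (\<forall>z\<in>\<Omega>. norm (avg h T z - integral\<^sup>L \<pi> h) \<le> e / 2) \<and>
                          (\<forall>z\<in>\<Omega>. norm (avg k T z - integral\<^sup>L \<pi> k) \<le> e / 2)) at_top"
    proof (rule eventually_conj)
      show "eventually (\<lambda>T. \<forall>z\<in>\<Omega>. norm (avg h T z - integral\<^sup>L \<pi> h) \<le> e / 2) at_top"
        using Eh e unfolding ET_def by (meson half_gt_zero)
      show "eventually (\<lambda>T. \<forall>z\<in>\<Omega>. norm (avg k T z - integral\<^sup>L \<pi> k) \<le> e / 2) at_top"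
        using Ek e unfolding ET_def by (meson half_gt_zero)
    qed
    then show "eventually (\<lambda>T. \<forall>z\<in>\<Omega>. norm (avg (\<lambda>z. h z + k z) T z - integral\<^sup>L \<pi> (\<lambda>z. h z + k z)) \<le> e) at_top"
    proof (rule eventually_mono, intro ballI)
      fix T z assume H: "(\<forall>z\<in>\<Omega>. norm (avg h T z - integral\<^sup>L \<pi> h) \<le> e / 2) \<and>
                          (\<forall>z\<in>\<Omega>. norm (avg k T z - integral\<^sup>L \<pi> k) \<le> e / 2)" and z: "z \<in> \<Omega>"
      have "norm (avg (\<lambda>z. h z + k z) T z - integral\<^sup>L \<pi> (\<lambda>z. h z + k z))
          = norm ((avg h T z - integral\<^sup>L \<pi> h) + (avg k T z - integral\<^sup>L \<pi> k))"
        unfolding a i by (rule arg_cong[where f=norm]) (rule abel2)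
      also have "\<dots> \<le> norm (avg h T z - integral\<^sup>L \<pi> h) + norm (avg k T z - integral\<^sup>L \<pi> k)"
        by (rule norm_triangle_ineq)
      also have "\<dots> \<le> e" using H z by fastforce
      finally show "norm (avg (\<lambda>z. h z + k z) T z - integral\<^sup>L \<pi> (\<lambda>z. h z + k z)) \<le> e" .
    qed
  qed
qed

lemma ET_zero: "ET (\<lambda>z. 0::'b::euclidean_space)"
  unfolding ET_def avg_def by simp

lemma ET_sum:
  fixes f :: "'i \<Rightarrow> complex^'k \<Rightarrow> 'b::euclidean_space"
  assumes "finite I" "\<And>i. i \<in> I \<Longrightarrow> continuous_on UNIV (f i) \<and> ET (f i)"
  shows "ET (\<lambda>z. \<Sum>i\<in>I. f i z)"
  using assms
proof (induction I rule: finite_induct)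
  case empty then show ?case using ET_zero by simp
next
  case (insert x F)
  have "ET (\<lambda>z. f x z + (\<Sum>i\<in>F. f i z))"
    by (rule ET_add) (use insert in \<open>auto intro!: continuous_intros\<close>)
  then show ?case using insert by simp
qed

lemma abel4: "(a::'b::ab_group_add) - d = ((a - b) + (b - c)) + (c - d)"
  by (simp add: algebra_simps)

lemma ET_approx:
  fixes h :: "complex^'k \<Rightarrow> 'b::euclidean_space"
  assumes ch: "continuous_on UNIV h"
    and A: "\<And>e. e > 0 \<Longrightarrow> \<exists>k. continuous_on UNIV k \<and> ET k \<and> (\<forall>z\<in>\<Omega>. norm (h z - k z) \<le> e)"
  shows "ET h"
  unfolding ET_def
proof (intro allI impI)
  fix e :: real assume e: "e > 0"
  obtain k where ck: "continuous_on UNIV k" and Ek: "ET k" and hk: "\<forall>z\<in>\<Omega>. norm (h z - k z) \<le> e/3"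
    using A[of "e/3"] e by auto
  have ev: "eventually (\<lambda>T. (\<forall>z\<in>\<Omega>. norm (avg k T z - integral\<^sup>L \<pi> k) \<le> e / 3) \<and> T > 0) at_top"
  proof (rule eventually_conj)
    show "eventually (\<lambda>T. \<forall>z\<in>\<Omega>. norm (avg k T z - integral\<^sup>L \<pi> k) \<le> e / 3) at_top"
      using Ek e unfolding ET_def by (meson divide_pos_pos zero_less_numeral)
  qed (rule eventually_gt_at_top)
  have i: "norm (integral\<^sup>L \<pi> k - integral\<^sup>L \<pi> h) \<le> e/3"
  proof -
    have "norm (integral\<^sup>L \<pi> k - integral\<^sup>L \<pi> h) = norm (integral\<^sup>L \<pi> (\<lambda>z. h z - k z))"
      by (simp add: Bochner_Integration.integral_diff[OF intg[OF ch] intg[OF ck]] norm_minus_commute)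
    also have "\<dots> \<le> (\<integral>z. norm (h z - k z) \<partial>\<pi>)" by (rule integral_norm_bound)
    also have "\<dots> \<le> e/3"
    proof (rule integral_le_const)
      show "integrable \<pi> (\<lambda>z. norm (h z - k z))"
        by (intro intg continuous_intros ch ck)
      show "AE z in \<pi>. norm (h z - k z) \<le> e / 3" using AE_\<Omega> by eventually_elim (use hk in auto)
    qed
    finally show ?thesis .
  qed
  show "eventually (\<lambda>T. \<forall>z\<in>\<Omega>. norm (avg h T z - integral\<^sup>L \<pi> h) \<le> e) at_top"
  proof (rule eventually_mono[OF ev], intro ballI)
    fix T z assume H: "(\<forall>z\<in>\<Omega>. norm (avg k T z - integral\<^sup>L \<pi> k) \<le> e / 3) \<and> T > 0" and z: "z \<in> \<Omega>"
    have d: "norm (avg h T z - avg k T z) \<le> e/3"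
    proof -
      have "avg h T z - avg k T z = (1/T) *\<^sub>R integral {0..T} (\<lambda>t. h (clock_flow \<omega> t z) - k (clock_flow \<omega> t z))"
        unfolding avg_def
        by (simp add: Henstock_Kurzweil_Integration.integral_diff[OF intg_t[OF ch] intg_t[OF ck]] scaleR_diff_right)
      moreover have "norm (integral {0..T} (\<lambda>t. h (clock_flow \<omega> t z) - k (clock_flow \<omega> t z))) \<le> e/3 * (T - 0)"
      proof (rule integral_bound)
        show "0 \<le> T" using H by simp
        show "continuous_on {0..T} (\<lambda>t. h (clock_flow \<omega> t z) - k (clock_flow \<omega> t z))"
          by (intro continuous_intros cont_t ch ck)
        show "norm (h (clock_flow \<omega> t z) - k (clock_flow \<omega> t z)) \<le> e / 3" for t
          using hk clock_flow_in[OF z] by blast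
      qed
      ultimately have "norm (avg h T z - avg k T z) = (1/T) * norm (integral {0..T} (\<lambda>t. h (clock_flow \<omega> t z) - k (clock_flow \<omega> t z)))"
        using H by simp
      also have "\<dots> \<le> (1/T) * (e/3 * (T - 0))"
        using H \<open>norm (integral {0..T} _) \<le> _\<close> by (intro mult_left_mono) auto
      also have "\<dots> = e/3" using H by simp
      finally show ?thesis .
    qed
    have eq: "avg h T z - integral\<^sup>L \<pi> h = ((avg h T z - avg k T z) + (avg k T z - integral\<^sup>L \<pi> k))
        + (integral\<^sup>L \<pi> k - integral\<^sup>L \<pi> h)"
      using abel4[of "avg h T z" "integral\<^sup>L \<pi> h" "avg k T z" "integral\<^sup>L \<pi> k"] .
    have "norm (avg h T z - integral\<^sup>L \<pi> h) \<le> norm ((avg h T z - avg k T z) + (avg k T z - integral\<^sup>L \<pi> k))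
        + norm (integral\<^sup>L \<pi> k - integral\<^sup>L \<pi> h)"
      unfolding eq by (rule norm_triangle_ineq)
    also have "\<dots> \<le> (norm (avg h T z - avg k T z) + norm (avg k T z - integral\<^sup>L \<pi> k))
        + norm (integral\<^sup>L \<pi> k - integral\<^sup>L \<pi> h)"
      by (intro add_right_mono norm_triangle_ineq)
    also have "\<dots> \<le> (e/3 + e/3) + e/3"
      using d H z i by (intro add_mono) blast+
    also have "(e/3 + e/3) + e/3 = e" by simp
    finally show "norm (avg h T z - integral\<^sup>L \<pi> h) \<le> e" .
  qed
qed

end

definition pw :: "complex \<Rightarrow> int \<Rightarrow> complex" where
  "pw z k = (if 0 \<le> k then z ^ nat k else cnj z ^ nat (-k))"

definition chr :: "('k::finite \<Rightarrow> int) \<Rightarrow> complex^'k \<Rightarrow> complex" where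
  "chr n z = (\<Prod>i\<in>UNIV. pw (z$i) (n i))"

lemma cnj_unit: "norm z = 1 \<Longrightarrow> cnj z = inverse z"
proof -
  assume "norm z = 1"
  then have "z * cnj z = 1" using complex_norm_square[of z] by simp
  then show ?thesis by (metis inverse_unique)
qed

lemma pw_unit: "norm z = 1 \<Longrightarrow> pw z k = z powi k"
  by (simp add: pw_def power_int_def cnj_unit)

lemma pw_mult_unit: "norm z = 1 \<Longrightarrow> pw z a * pw z b = pw z (a + b)"
proof -
  assume z: "norm z = 1"
  then have "z \<noteq> 0" by auto
  then show ?thesis using z by (simp add: pw_unit power_int_add)
qed

lemma norm_pw_unit: "norm z = 1 \<Longrightarrow> norm (pw z k) = 1"
  by (simp add: pw_def norm_power)

lemma pw_mult: "pw (a * b) k = pw a k * pw b k"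
  by (simp add: pw_def power_mult_distrib)

lemma pw_0: "pw z 0 = 1" by (simp add: pw_def)

lemma pw_exp: "pw (exp (\<i> * complex_of_real x)) k = exp (\<i> * complex_of_real (of_int k * x))"
proof (cases "0 \<le> k")
  case True
  then have "exp (\<i> * complex_of_real x) ^ nat k = exp (of_nat (nat k) * (\<i> * complex_of_real x))"
    by (simp only: exp_of_nat_mult)
  also have "\<dots> = exp (\<i> * complex_of_real (of_int k * x))" using True by (simp add: algebra_simps)
  finally show ?thesis using True by (simp add: pw_def)
next
  case False
  have "cnj (exp (\<i> * complex_of_real x)) ^ nat (-k) = exp (- (\<i> * complex_of_real x)) ^ nat (-k)"
    by (simp add: exp_cnj)
  also have "\<dots> = exp (of_nat (nat (-k)) * (- (\<i> * complex_of_real x)))"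
    by (simp only: exp_of_nat_mult)
  also have "\<dots> = exp (\<i> * complex_of_real (of_int k * x))" using False by (simp add: algebra_simps)
  finally show ?thesis using False by (simp add: pw_def)
qed

lemma continuous_pw: "continuous_on UNIV (\<lambda>z::complex^'k::finite. pw (z$i) k)"
  unfolding pw_def by (cases "0 \<le> k") (simp_all add: continuous_intros)

lemma continuous_chr: "continuous_on UNIV (chr n)"
  unfolding chr_def by (intro continuous_on_prod continuous_pw)

lemma chr_mult: "z \<in> torus \<Longrightarrow> chr n z * chr m z = chr (\<lambda>i. n i + m i) z"
  unfolding chr_def torus_def by (simp add: prod.distrib[symmetric] pw_mult_unit)

lemma chr_0: "chr (\<lambda>i. 0) z = 1"
  by (simp add: chr_def pw_0)

lemma norm_chr: "z \<in> torus \<Longrightarrow> norm (chr n z) = 1"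
  unfolding chr_def torus_def by (simp add: prod_norm[symmetric] norm_pw_unit)

lemma chr_flow:
  "chr n (clock_flow \<omega> t z) = exp (\<i> * complex_of_real (2 * pi * (\<Sum>i\<in>UNIV. of_int (n i) * \<omega> i) * t)) * chr n z"
proof -
  have e: "pw (clock_flow \<omega> t z $ i) (n i) = exp (\<i> * complex_of_real (of_int (n i) * (2 * pi * \<omega> i * t))) * pw (z$i) (n i)" for i
  proof -
    have "exp (2 * complex_of_real pi * \<i> * complex_of_real (\<omega> i * t)) = exp (\<i> * complex_of_real (2 * pi * \<omega> i * t))"
      by (simp add: algebra_simps)
    then have "clock_flow \<omega> t z $ i = exp (\<i> * complex_of_real (2 * pi * \<omega> i * t)) * z$i"
      by (simp add: clock_flow_def)
    then show ?thesis by (simp only: pw_mult pw_exp)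
  qed
  have "chr n (clock_flow \<omega> t z) = (\<Prod>i\<in>UNIV. exp (\<i> * complex_of_real (of_int (n i) * (2 * pi * \<omega> i * t))) * pw (z$i) (n i))"
    unfolding chr_def e ..
  also have "\<dots> = exp (\<Sum>i\<in>UNIV. \<i> * complex_of_real (of_int (n i) * (2 * pi * \<omega> i * t))) * chr n z"
    by (simp add: prod.distrib exp_sum chr_def)
  also have "(\<Sum>i\<in>UNIV. \<i> * complex_of_real (of_int (n i) * (2 * pi * \<omega> i * t)))
      = \<i> * complex_of_real (2 * pi * (\<Sum>i\<in>UNIV. of_int (n i) * \<omega> i) * t)"
    by (simp add: sum_distrib_left sum_distrib_right algebra_simps)
  finally show ?thesis .
qed

inductive TP :: "(complex^'k::finite \<Rightarrow> complex) \<Rightarrow> bool" where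
  chi: "TP (\<lambda>z. c * chr n z)"
| add: "TP h \<Longrightarrow> TP k \<Longrightarrow> TP (\<lambda>z. h z + k z)"
| agree: "TP h \<Longrightarrow> (\<And>z. z \<in> torus \<Longrightarrow> k z = h z) \<Longrightarrow> TP k"

lemma TP_cmult: "TP h \<Longrightarrow> TP (\<lambda>z. c * h z)"
proof (induction rule: TP.induct)
  case (chi c' n)
  show ?case by (rule TP.agree[OF TP.chi[of "c * c'" n]]) simp
next
  case (add h k)
  show ?case by (rule TP.agree[OF TP.add[OF add.IH]]) (simp add: distrib_left)
next
  case (agree h k)
  show ?case by (rule TP.agree[OF agree.IH]) (simp add: agree.hyps)
qed

lemma TP_mult_chi: "TP k \<Longrightarrow> TP (\<lambda>z. (c * chr n z) * k z)"
proof (induction rule: TP.induct)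
  case (chi d m)
  show ?case
  proof (rule TP.agree[OF TP.chi[of "c * d" "\<lambda>i. n i + m i"]])
    fix z :: "complex^'a" assume "z \<in> torus"
    then show "c * chr n z * (d * chr m z) = c * d * chr (\<lambda>i. n i + m i) z"
      using chr_mult[of z n m] by (simp add: algebra_simps)
  qed
next
  case (add h k)
  show ?case by (rule TP.agree[OF TP.add[OF add.IH]]) (simp add: distrib_left)
next
  case (agree h k)
  show ?case by (rule TP.agree[OF agree.IH]) (simp add: agree.hyps)
qed

lemma TP_mult: "TP h \<Longrightarrow> TP k \<Longrightarrow> TP (\<lambda>z. h z * k z)"
proof (induction rule: TP.induct)
  case (chi c n)
  then show ?case by (rule TP_mult_chi)
next
  case (add h1 h2)
  show ?case by (rule TP.agree[OF TP.add[OF add.IH(1)[OF add.prems] add.IH(2)[OF add.prems]]])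
                (simp add: distrib_right)
next
  case (agree h h')
  show ?case by (rule TP.agree[OF agree.IH[OF agree.prems]]) (simp add: agree.hyps)
qed

lemma TP_const: "TP (\<lambda>z. c)"
  by (rule TP.agree[OF TP.chi[of c "\<lambda>i. 0"]]) (simp add: chr_0)

lemma TP_sum: "finite I \<Longrightarrow> (\<And>i. i \<in> I \<Longrightarrow> TP (f i)) \<Longrightarrow> TP (\<lambda>z. \<Sum>i\<in>I. f i z)"
proof (induction I rule: finite_induct)
  case empty then show ?case using TP_const[of 0] by simp
next
  case (insert x F)
  have "TP (\<lambda>z. f x z + (\<Sum>i\<in>F. f i z))" using insert by (intro TP.add) auto
  then show ?case by (rule TP.agree) (simp add: insert.hyps)
qed

lemma chr_coord: "chr (\<lambda>j. if j = i then 1 else 0) z = z$i"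
proof -
  have "pw (z$j) (if j = i then 1 else 0) = (if j = i then z$i else 1)" for j
    by (simp add: pw_def)
  then show ?thesis unfolding chr_def by simp
qed

lemma chr_coord_cnj: "chr (\<lambda>j. if j = i then -1 else 0) z = cnj (z$i)"
proof -
  have "pw (z$j) (if j = i then -1 else 0) = (if j = i then cnj (z$i) else 1)" for j
    by (simp add: pw_def)
  then show ?thesis unfolding chr_def by simp
qed

lemma TP_coord: "TP (\<lambda>z. z$i)"
  by (rule TP.agree[OF TP.chi[of 1 "\<lambda>j. if j = i then 1 else 0"]]) (simp add: chr_coord)

lemma TP_coord_cnj: "TP (\<lambda>z. cnj (z$i))"
  by (rule TP.agree[OF TP.chi[of 1 "\<lambda>j. if j = i then -1 else 0"]]) (simp add: chr_coord_cnj)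

lemma TP_Re: "TP (\<lambda>z. complex_of_real (Re (z$i)))"
proof (rule TP.agree[OF TP.add[OF TP_cmult[OF TP_coord, of "1/2" i] TP_cmult[OF TP_coord_cnj, of "1/2" i]]])
  fix z :: "complex^'a"
  show "complex_of_real (Re (z $ i)) = 1 / 2 * z $ i + 1 / 2 * cnj (z $ i)"
    by (simp add: complex_eq_iff)
qed

lemma TP_Im: "TP (\<lambda>z. complex_of_real (Im (z$i)))"
proof (rule TP.agree[OF TP.add[OF TP_cmult[OF TP_coord, of "-\<i>/2" i] TP_cmult[OF TP_coord_cnj, of "\<i>/2" i]]])
  fix z :: "complex^'a"
  show "complex_of_real (Im (z $ i)) = - \<i> / 2 * z $ i + \<i> / 2 * cnj (z $ i)"
    by (simp add: complex_eq_iff)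
qed

lemma vec_decomp: "(z::complex^'k::finite) = (\<Sum>i\<in>UNIV. Re (z$i) *\<^sub>R axis i 1 + Im (z$i) *\<^sub>R axis i \<i>)"
proof -
  have h: "(Re (z$x) *\<^sub>R axis x 1 + Im (z$x) *\<^sub>R axis x \<i>) $ j = (if x = j then z$j else 0)" for x j
    by (cases "x = j") (simp_all add: axis_def complex_eq_iff)
  show ?thesis by (simp only: vec_eq_iff sum_component h) simp
qed

lemma TP_linear:
  fixes f :: "complex^'k::finite \<Rightarrow> real"
  assumes "bounded_linear f"
  shows "TP (\<lambda>z. complex_of_real (f z))"
proof -
  interpret f: bounded_linear f by fact
  have r: "f z = (\<Sum>i\<in>UNIV. f (axis i 1) * Re (z$i) + f (axis i \<i>) * Im (z$i))" for z
  proof -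
    have "f z = f (\<Sum>i\<in>UNIV. Re (z$i) *\<^sub>R axis i 1 + Im (z$i) *\<^sub>R axis i \<i>)"
      by (rule arg_cong[where f=f], rule vec_decomp)
    also have "\<dots> = (\<Sum>i\<in>UNIV. f (Re (z$i) *\<^sub>R axis i 1 + Im (z$i) *\<^sub>R axis i \<i>))"
      by (rule f.sum)
    also have "\<dots> = (\<Sum>i\<in>UNIV. f (axis i 1) * Re (z$i) + f (axis i \<i>) * Im (z$i))"
      by (simp only: f.add f.scaleR real_scaleR_def mult.commute)
    finally show ?thesis .
  qed
  have eq: "complex_of_real (f z) = (\<Sum>i\<in>UNIV. complex_of_real (f (axis i 1)) * complex_of_real (Re (z$i))
      + complex_of_real (f (axis i \<i>)) * complex_of_real (Im (z$i)))" for z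
    unfolding r[of z] by (simp only: of_real_sum of_real_add of_real_mult)
  have "TP (\<lambda>z. \<Sum>i\<in>UNIV. complex_of_real (f (axis i 1)) * complex_of_real (Re (z$i))
      + complex_of_real (f (axis i \<i>)) * complex_of_real (Im (z$i)))"
    by (rule TP_sum[OF finite_class.finite_UNIV]) (intro TP.add TP_cmult TP_Re TP_Im)
  then show ?thesis by (rule TP.agree) (rule eq)
qed

lemma TP_poly:
  fixes p :: "complex^'k::finite \<Rightarrow> real"
  shows "real_polynomial_function p \<Longrightarrow> TP (\<lambda>z. complex_of_real (p z))"
proof (induction rule: real_polynomial_function.induct)
  case (linear f) then show ?case by (rule TP_linear)
next
  case (const c) then show ?case by (rule TP_const)
next
  case (add f g) show ?case by (rule TP.agree[OF TP.add[OF add.IH]]) simp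
next
  case (mult f g) show ?case by (rule TP.agree[OF TP_mult[OF mult.IH]]) simp
qed

context clk begin

lemma flow_meas: "clock_flow \<omega> t \<in> measurable \<pi> \<pi>"
proof -
  have "clock_flow \<omega> t \<in> borel_measurable borel"
    by (rule borel_measurable_continuous_onI[OF continuous_clock_flow])
  then show ?thesis by (simp only: measurable_cong_sets[OF sets_\<pi> sets_\<pi>])
qed

lemma exp_imag_int:
  fixes a w :: complex and T :: real
  assumes "a \<noteq> 0" and "0 \<le> T"
  shows "((\<lambda>t. exp (a * complex_of_real t) * w) has_integral
          (exp (a * complex_of_real T) * (w / a) - exp (a * complex_of_real 0) * (w / a))) {0..T}"
proof (rule fundamental_theorem_of_calculus[OF assms(2)])
  fix t :: real assume "t \<in> {0..T}"
  have "((\<lambda>u. exp (a * u)) has_field_derivative exp (a * complex_of_real t) * a) (at (complex_of_real t))"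
    by (auto intro!: derivative_eq_intros)
  then have "((\<lambda>u. exp (a * u) * (w / a)) has_field_derivative exp (a * complex_of_real t) * a * (w / a)) (at (complex_of_real t))"
    by (rule DERIV_cmult_right)
  then have "((\<lambda>u. exp (a * u) * (w / a)) has_field_derivative exp (a * complex_of_real t) * w) (at (complex_of_real t))"
    using assms by simp
  then show "((\<lambda>t. exp (a * complex_of_real t) * (w / a)) has_vector_derivative exp (a * complex_of_real t) * w)
      (at t within {0..T})"
    by (rule has_vector_derivative_real_field)
qed

lemma ET_chi: "ET (chr n)"
proof -
  define s where "s = (\<Sum>i\<in>UNIV. of_int (n i) * \<omega> i)"
  define a where "a = \<i> * complex_of_real (2 * pi * s)"
  have fl: "chr n (clock_flow \<omega> t z) = exp (a * complex_of_real t) * chr n z" for t z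
    using chr_flow[of n \<omega> t z] unfolding s_def a_def by (simp add: mult.assoc)
  have cont: "continuous_on UNIV (chr n)" by (rule continuous_chr)
  show ?thesis
  proof (cases "s = 0")
    case True
    define c where "c = chr n (clock \<omega> \<phi> 0)"
    have const: "\<forall>z\<in>\<Omega>. chr n z = c"
    proof -
      have "chr n (clock \<omega> \<phi> t) = c" for t
      proof -
        have "chr n (clock \<omega> \<phi> t) = chr n (clock_flow \<omega> t (clock \<omega> \<phi> 0))"
          by (simp add: clock_flow_clock)
        also have "\<dots> = c" unfolding fl c_def using True by (simp add: a_def)
        finally show ?thesis .
      qed
      then have "range (clock \<omega> \<phi>) \<subseteq> {z. chr n z = c}" by auto
      moreover have "closed {z. chr n z = c}"
        using continuous_closed_preimage_constant[OF cont closed_UNIV, of c] by simp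
      ultimately have "\<Omega> \<subseteq> {z. chr n z = c}" unfolding clock_set_def by (rule closure_minimal)
      then show ?thesis by blast
    qed
    have av: "avg (chr n) T z = c" if "z \<in> \<Omega>" "T > 0" for T z
    proof -
      have "integral {0..T} (\<lambda>t. chr n (clock_flow \<omega> t z)) = integral {0..T} (\<lambda>t. c)"
        by (rule integral_cong) (use const clock_flow_in[OF that(1)] in blast)
      also have "\<dots> = T *\<^sub>R c" using that by simp
      finally show ?thesis unfolding avg_def using that by simp
    qed
    have I: "integral\<^sup>L \<pi> (chr n) = c"
    proof -
      have "integral\<^sup>L \<pi> (chr n) = integral\<^sup>L \<pi> (\<lambda>z. c)"
        by (rule integral_cong_AE[OF meas[OF cont]]) (use AE_\<Omega> const in auto)
      also have "\<dots> = c" by (simp add: prob_space)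
      finally show ?thesis .
    qed
    show ?thesis unfolding ET_def
    proof (intro allI impI)
      fix e :: real assume "e > 0"
      show "eventually (\<lambda>T. \<forall>z\<in>\<Omega>. norm (avg (chr n) T z - integral\<^sup>L \<pi> (chr n)) \<le> e) at_top"
        by (rule eventually_mono[OF eventually_gt_at_top[of 0]]) (use av I \<open>e > 0\<close> in auto)
    qed
  next
    case False
    then have a0: "a \<noteq> 0" by (simp add: a_def)
    have I: "integral\<^sup>L \<pi> (chr n) = 0"
    proof -
      define t0 where "t0 = 1 / (2 * s)"
      have e: "exp (a * complex_of_real t0) = -1"
      proof -
        have "a * complex_of_real t0 = \<i> * complex_of_real pi"
          using False by (simp add: a_def t0_def field_simps)
        then show ?thesis by simp
      qed
      have "integral\<^sup>L \<pi> (chr n) = integral\<^sup>L (distr \<pi> \<pi> (clock_flow \<omega> t0)) (chr n)"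
        using inv by simp
      also have "\<dots> = integral\<^sup>L \<pi> (\<lambda>z. chr n (clock_flow \<omega> t0 z))"
        by (rule integral_distr[OF flow_meas meas[OF cont]])
      also have "\<dots> = integral\<^sup>L \<pi> (\<lambda>z. exp (a * complex_of_real t0) * chr n z)"
        by (simp only: fl)
      also have "\<dots> = exp (a * complex_of_real t0) * integral\<^sup>L \<pi> (chr n)"
        by (rule integral_mult_right_zero)
      finally show ?thesis unfolding e by simp
    qed
    have bound: "norm (avg (chr n) T z) \<le> 2 / (norm a * T)" if "z \<in> \<Omega>" "T > 0" for T z
    proof -
      define w where "w = chr n z"
      have w1: "norm w = 1" using norm_chr[of z n] clock_set_torus that(1) unfolding w_def by blast
      have ea: "norm (exp (a * complex_of_real t)) = 1" for t
        by (simp add: norm_exp_eq_Re a_def)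
      have "integral {0..T} (\<lambda>t. chr n (clock_flow \<omega> t z)) = integral {0..T} (\<lambda>t. exp (a * complex_of_real t) * w)"
        by (simp only: fl w_def)
      also have "\<dots> = exp (a * complex_of_real T) * (w / a) - exp (a * complex_of_real 0) * (w / a)"
        by (rule integral_unique[OF exp_imag_int[OF a0]]) (use that in simp)
      finally have "norm (integral {0..T} (\<lambda>t. chr n (clock_flow \<omega> t z))) \<le>
          norm (exp (a * complex_of_real T) * (w / a)) + norm (exp (a * complex_of_real 0) * (w / a))"
        by (metis norm_triangle_ineq4)
      also have "\<dots> = 2 / norm a"
      proof -
        have ra: "Re a = 0" by (simp add: a_def)
        show ?thesis using w1 by (simp add: norm_mult norm_divide norm_exp_eq_Re ra)
      qed
      finally have "norm (integral {0..T} (\<lambda>t. chr n (clock_flow \<omega> t z))) \<le> 2 / norm a" .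
      then have X: "norm (integral {0..T} (\<lambda>t. chr n (clock_flow \<omega> t z))) / T \<le> (2 / norm a) / T"
        using that by (intro divide_right_mono) auto
      have "norm (avg (chr n) T z) = norm (integral {0..T} (\<lambda>t. chr n (clock_flow \<omega> t z))) / T"
        unfolding avg_def using that by simp
      also have "\<dots> \<le> (2 / norm a) / T" by (rule X)
      also have "\<dots> = 2 / (norm a * T)" by simp
      finally show ?thesis .
    qed
    show ?thesis unfolding ET_def
    proof (intro allI impI)
      fix e :: real assume e: "e > 0"
      have na: "norm a > 0" using a0 by simp
      show "eventually (\<lambda>T. \<forall>z\<in>\<Omega>. norm (avg (chr n) T z - integral\<^sup>L \<pi> (chr n)) \<le> e) at_top"
      proof (rule eventually_mono[OF eventually_ge_at_top[of "2 / (norm a * e) + 1"]], intro ballI)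
        fix T z assume T: "2 / (norm a * e) + 1 \<le> T" and z: "z \<in> \<Omega>"
        have T0: "T > 0" using T na e by (smt (verit) divide_pos_pos mult_pos_pos)
        have "2 / (norm a * e) \<le> T" using T by simp
        then have "2 \<le> T * (norm a * e)" using na e by (simp add: divide_le_eq)
        then have "2 / (norm a * T) \<le> e" using na T0 by (simp add: divide_le_eq algebra_simps)
        then show "norm (avg (chr n) T z - integral\<^sup>L \<pi> (chr n)) \<le> e"
          using bound[OF z T0] I by simp
      qed
    qed
  qed
qed

end

context clk begin

lemma ET_TP: "TP h \<Longrightarrow> \<exists>k. continuous_on UNIV k \<and> ET k \<and> (\<forall>z\<in>torus. h z = k z)"
proof (induction rule: TP.induct)
  case (chi c n)
  have "ET (\<lambda>z. c * chr n z)"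
    by (rule ET_linear[OF bounded_linear_mult_right continuous_chr ET_chi])
  moreover have "continuous_on UNIV (\<lambda>z. c * chr n z)"
    by (intro continuous_intros continuous_chr)
  ultimately show ?case by blast
next
  case (add h k)
  obtain k1 where k1: "continuous_on UNIV k1" "ET k1" "\<forall>z\<in>torus. h z = k1 z" using add.IH(1) by blast
  obtain k2 where k2: "continuous_on UNIV k2" "ET k2" "\<forall>z\<in>torus. k z = k2 z" using add.IH(2) by blast
  have "ET (\<lambda>z. k1 z + k2 z)" by (rule ET_add[OF k1(1) k2(1) k1(2) k2(2)])
  moreover have "continuous_on UNIV (\<lambda>z. k1 z + k2 z)" by (intro continuous_intros k1(1) k2(1))
  ultimately show ?case using k1(3) k2(3) by (intro exI[of _ "\<lambda>z. k1 z + k2 z"]) auto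
next
  case (agree h k)
  then show ?case by metis
qed

lemma ET_realpoly:
  fixes p :: "complex^'k \<Rightarrow> real"
  assumes p: "real_polynomial_function p"
  shows "ET p"
proof -
  have cp: "continuous_on UNIV p"
    using p by (simp add: real_polynomial_function_eq continuous_on_polymonial_function)
  obtain k where k: "continuous_on UNIV k" "ET k" "\<forall>z\<in>torus. complex_of_real (p z) = k z"
    using ET_TP[OF TP_poly[OF p]] by blast
  have c1: "continuous_on UNIV (\<lambda>z. complex_of_real (p z))" by (intro continuous_intros cp)
  have "ET (\<lambda>z. complex_of_real (p z))"
    by (rule ET_agree[OF k(1) c1 _ k(2)]) (use k(3) clock_set_torus[of \<omega> \<phi>] in auto)
  then have "ET (\<lambda>z. Re (complex_of_real (p z)))"
    by (rule ET_linear[OF bounded_linear_Re c1])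
  then show ?thesis by simp
qed

lemma ET_poly:
  fixes g :: "complex^'k \<Rightarrow> 'b::euclidean_space"
  assumes g: "polynomial_function g"
  shows "ET g"
proof -
  have cg: "continuous_on UNIV g" using g by (rule continuous_on_polymonial_function)
  have "ET (\<lambda>z. \<Sum>b\<in>Basis. (g z \<bullet> b) *\<^sub>R b)"
  proof (rule ET_sum[OF finite_Basis])
    fix b :: 'b assume b: "b \<in> Basis"
    have rp: "real_polynomial_function (\<lambda>z. g z \<bullet> b)"
      using g b by (simp add: polynomial_function_iff_Basis_inner)
    have ci: "continuous_on UNIV (\<lambda>z. g z \<bullet> b)" by (intro continuous_intros cg)
    have "ET (\<lambda>z. (g z \<bullet> b) *\<^sub>R b)"
      by (rule ET_linear[OF bounded_linear_scaleR_left ci ET_realpoly[OF rp]])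
    moreover have "continuous_on UNIV (\<lambda>z. (g z \<bullet> b) *\<^sub>R b)" by (intro continuous_intros cg)
    ultimately show "continuous_on UNIV (\<lambda>z. (g z \<bullet> b) *\<^sub>R b) \<and> ET (\<lambda>z. (g z \<bullet> b) *\<^sub>R b)" by blast
  qed
  then show ?thesis by (simp add: euclidean_representation)
qed

lemma ET_cont:
  fixes h :: "complex^'k \<Rightarrow> 'b::euclidean_space"
  assumes ch: "continuous_on UNIV h"
  shows "ET h"
proof (rule ET_approx[OF ch])
  fix e :: real assume e: "e > 0"
  obtain g where g: "polynomial_function g" "\<forall>x\<in>\<Omega>. norm (h x - g x) < e"
    using Stone_Weierstrass_polynomial_function[OF compact_clock_set[of \<omega> \<phi>] continuous_on_subset[OF ch] e] by auto
  show "\<exists>k. continuous_on UNIV k \<and> ET k \<and> (\<forall>z\<in>\<Omega>. norm (h z - k z) \<le> e)"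
    using g continuous_on_polymonial_function[OF g(1)] ET_poly[OF g(1)] by (meson less_imp_le)
qed

end

context clk begin

lemma avg_const: "T > 0 \<Longrightarrow> (1/T) *\<^sub>R integral {0..T} (\<lambda>t. c) = (c::'b::euclidean_space)"
  by simp

lemma avg_close:
  fixes h k :: "complex^'k \<Rightarrow> 'b::euclidean_space"
  assumes ch: "continuous_on UNIV h" and ck: "continuous_on UNIV k"
    and close: "\<forall>z\<in>\<Omega>. norm (h z - k z - c) \<le> \<delta>" and T: "T > 0" and z: "z \<in> \<Omega>"
  shows "norm ((avg h T z - integral\<^sup>L \<pi> h) - (avg k T z - integral\<^sup>L \<pi> k)) \<le> 2 * \<delta>"
proof -
  define d where "d = (\<lambda>z. h z - k z - c)"
  have cd: "continuous_on UNIV d" unfolding d_def by (intro continuous_intros ch ck)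
  have a1: "avg h T z - avg k T z = avg d T z + c"
  proof -
    have "integral {0..T} (\<lambda>t. d (clock_flow \<omega> t z)) =
        integral {0..T} (\<lambda>t. h (clock_flow \<omega> t z)) - integral {0..T} (\<lambda>t. k (clock_flow \<omega> t z)) - integral {0..T} (\<lambda>t. c)"
      unfolding d_def
      by (simp only: Henstock_Kurzweil_Integration.integral_diff intg_t ch ck integrable_const_ivl
           integrable_diff)
    also have "integral {0..T} (\<lambda>t. c) = T *\<^sub>R c" using T by simp
    finally have eq: "integral {0..T} (\<lambda>t. d (clock_flow \<omega> t z)) =
        integral {0..T} (\<lambda>t. h (clock_flow \<omega> t z)) - integral {0..T} (\<lambda>t. k (clock_flow \<omega> t z)) - T *\<^sub>R c" .
    have "avg d T z = (1/T) *\<^sub>R (integral {0..T} (\<lambda>t. h (clock_flow \<omega> t z)) - integral {0..T} (\<lambda>t. k (clock_flow \<omega> t z))) - c"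
      unfolding avg_def eq using T by (simp only: scaleR_diff_right) simp
    then show ?thesis unfolding avg_def by (simp add: scaleR_diff_right)
  qed
  have i1: "integral\<^sup>L \<pi> h - integral\<^sup>L \<pi> k = integral\<^sup>L \<pi> d + c"
  proof -
    have "integral\<^sup>L \<pi> d = integral\<^sup>L \<pi> h - integral\<^sup>L \<pi> k - integral\<^sup>L \<pi> (\<lambda>z. c)"
      unfolding d_def
      by (simp only: Bochner_Integration.integral_diff intg ch ck integrable_const Bochner_Integration.integrable_diff)
    then show ?thesis by (simp add: prob_space)
  qed
  have b1: "norm (avg d T z) \<le> \<delta>"
  proof -
    have "norm (integral {0..T} (\<lambda>t. d (clock_flow \<omega> t z))) \<le> \<delta> * (T - 0)"
    proof (rule integral_bound)
      show "continuous_on {0..T} (\<lambda>t. d (clock_flow \<omega> t z))" by (rule cont_t[OF cd])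
      show "norm (d (clock_flow \<omega> t z)) \<le> \<delta>" for t using close clock_flow_in[OF z] unfolding d_def by blast
    qed (use T in simp)
    then show ?thesis unfolding avg_def using T by (simp add: divide_simps mult.commute)
  qed
  have b2: "norm (integral\<^sup>L \<pi> d) \<le> \<delta>"
  proof -
    have "norm (integral\<^sup>L \<pi> d) \<le> (\<integral>z. norm (d z) \<partial>\<pi>)" by (rule integral_norm_bound)
    also have "\<dots> \<le> \<delta>"
    proof (rule integral_le_const)
      show "integrable \<pi> (\<lambda>z. norm (d z))" by (intro intg continuous_intros cd)
      show "AE z in \<pi>. norm (d z) \<le> \<delta>" using AE_\<Omega> by eventually_elim (use close in \<open>auto simp: d_def\<close>)
    qed
    finally show ?thesis .
  qed
  have "(avg h T z - integral\<^sup>L \<pi> h) - (avg k T z - integral\<^sup>L \<pi> k) = avg d T z - integral\<^sup>L \<pi> d"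
    using a1 i1 by (simp add: algebra_simps)
  also have "norm \<dots> \<le> norm (avg d T z) + norm (integral\<^sup>L \<pi> d)" by (rule norm_triangle_ineq4)
  finally show ?thesis using b1 b2 by simp
qed

end

lemma ereal_sup_tendsto_0:
  fixes X :: "real \<Rightarrow> 'p \<Rightarrow> real"
  assumes ne: "p0 \<in> A" and nn: "\<And>T p. X T p \<ge> 0"
    and ev: "\<And>e. e > 0 \<Longrightarrow> eventually (\<lambda>T. \<forall>p\<in>A. X T p \<le> e) at_top"
  shows "((\<lambda>T. SUP p\<in>A. ereal (X T p)) \<longlongrightarrow> 0) at_top"
proof (rule order_tendstoI)
  fix a :: ereal assume "a < 0"
  have "a < (SUP p\<in>A. ereal (X T p))" for T
  proof -
    have "a < ereal (X T p0)" using \<open>a < 0\<close> nn[of T p0] by (metis ereal_less_eq(3) order_less_le_trans zero_ereal_def)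
    also have "\<dots> \<le> (SUP p\<in>A. ereal (X T p))" using ne by (rule SUP_upper)
    finally show ?thesis .
  qed
  then show "eventually (\<lambda>T. a < (SUP p\<in>A. ereal (X T p))) at_top" by simp
next
  fix a :: ereal assume "0 < a"
  then obtain r where r: "r > 0" "ereal r < a"
    by (metis ereal_dense2 ereal_less_eq(5) less_ereal.simps(1) order_less_trans zero_ereal_def)
  show "eventually (\<lambda>T. (SUP p\<in>A. ereal (X T p)) < a) at_top"
  proof (rule eventually_mono[OF ev[OF r(1)]])
    fix T assume "\<forall>p\<in>A. X T p \<le> r"
    then have "(SUP p\<in>A. ereal (X T p)) \<le> ereal r" by (intro SUP_least) auto
    then show "(SUP p\<in>A. ereal (X T p)) < a" using r(2) by (rule le_less_trans)
  qed
qed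

theorem proposition2p2:
  fixes f :: "real^'d \<Rightarrow> real^'m \<Rightarrow> real^'d"
    and G0 :: "real^'k::finite \<Rightarrow> real^'m"
    and \<omega> \<phi> :: "'k \<Rightarrow> real"
    and \<pi> :: "(complex^'k) measure"
    and L\<^sub>f :: real
  defines "\<Omega> \<equiv> clock_set \<omega> \<phi>"
    and "G \<equiv> G_of G0"
    and "fbar \<equiv> (\<lambda>\<theta>. integral\<^sup>L \<pi> (\<lambda>z. f \<theta> (G_of G0 z)))"
  assumes f_cont: "continuous_on UNIV (\<lambda>(\<theta>, \<xi>). f \<theta> \<xi>)"
    and \<omega>_pos: "\<forall>i. \<omega> i > 0"
    and A0a_analytic: "real_analytic G0"
    and A0a_summable: "taylor_abs_summable G0"
    and \<pi>_prob: "prob_space \<pi>"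
    and \<pi>_sets: "sets \<pi> = sets borel"
    and \<pi>_on_\<Omega>: "emeasure \<pi> \<Omega> = 1"
    and \<pi>_invariant: "\<forall>t. distr \<pi> \<pi> (clock_flow \<omega> t) = \<pi>"
    and A1_fbar: "\<forall>\<theta> \<theta>'. norm (fbar \<theta>' - fbar \<theta>) \<le> L\<^sub>f * norm (\<theta>' - \<theta>)"
    and A1_f: "\<forall>\<theta> \<theta>' \<xi> \<xi>'. norm (f \<theta>' \<xi> - f \<theta> \<xi>) + norm (f \<theta> \<xi>' - f \<theta> \<xi>)
                  \<le> L\<^sub>f * (norm (\<theta>' - \<theta>) + norm (\<xi>' - \<xi>))"
  shows "((\<lambda>T. SUP p\<in>(UNIV :: (real^'d) set) \<times> \<Omega>.
            ereal (norm ((1 / T) *\<^sub>R integral {0..T}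
                     (\<lambda>t. f (fst p) (G (clock_flow \<omega> t (snd p))) - fbar (fst p)))
                   / (1 + norm (fst p))))
          \<longlongrightarrow> 0) at_top"
proof -
  interpret clk \<omega> \<phi> \<pi>
  proof (rule clk.intro)
    show "prob_space \<pi>" by (rule \<pi>_prob)
    show "sets \<pi> = sets borel" by (rule \<pi>_sets)
    show "emeasure \<pi> (clock_set \<omega> \<phi>) = 1" using \<pi>_on_\<Omega> unfolding \<Omega>_def .
    show "\<forall>t. distr \<pi> \<pi> (clock_flow \<omega> t) = \<pi>" by (rule \<pi>_invariant)
  qed
  have cG0: "continuous_on UNIV G0" by (rule real_analytic_continuous[OF A0a_analytic])
  define G' where "G' = (\<lambda>z::complex^'k. G0 (\<chi> i. Re (z$i)))"
  have cG': "continuous_on UNIV G'"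
    unfolding G'_def by (rule continuous_on_compose2[OF cG0]) (auto intro!: continuous_intros)
  have GG': "G z = G' z" if "z \<in> torus" for z
  proof -
    have "(\<chi> i. Re ((z$i + inverse (z$i)) / 2)) = (\<chi> i. Re (z$i))"
      using that by (simp add: vec_eq_iff torus_def cnj_unit[symmetric])
    then show ?thesis by (simp add: G_def G'_def G_of_def)
  qed
  have Lip: "norm (f \<theta> \<xi>' - f \<theta> \<xi>) \<le> \<bar>L\<^sub>f\<bar> * norm (\<xi>' - \<xi>)" for \<theta> \<xi> \<xi>'
  proof -
    have "norm (f \<theta> \<xi> - f \<theta> \<xi>) + norm (f \<theta> \<xi>' - f \<theta> \<xi>) \<le> L\<^sub>f * (norm (\<theta> - \<theta>) + norm (\<xi>' - \<xi>))"
      using A1_f by blast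
    then have "norm (f \<theta> \<xi>' - f \<theta> \<xi>) \<le> L\<^sub>f * norm (\<xi>' - \<xi>)" by simp
    also have "\<dots> \<le> \<bar>L\<^sub>f\<bar> * norm (\<xi>' - \<xi>)" by (intro mult_right_mono) auto
    finally show ?thesis .
  qed
  have cf: "continuous_on UNIV (f \<theta>)" for \<theta>
  proof -
    have "continuous_on UNIV (\<lambda>\<xi>. (\<lambda>(\<theta>, \<xi>). f \<theta> \<xi>) (\<theta>, \<xi>))"
      by (rule continuous_on_compose2[OF f_cont]) (auto intro!: continuous_intros)
    then show ?thesis by simp
  qed
  define H where "H = (\<lambda>\<theta> z. f \<theta> (G' z))"
  have cH: "continuous_on UNIV (H \<theta>)" for \<theta>
    unfolding H_def by (rule continuous_on_compose2[OF cf cG']) auto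
  have ETH: "ET (H \<theta>)" for \<theta> by (rule ET_cont[OF cH])
  define A where "A = (\<lambda>z::complex^'k. (\<chi> i. Re ((z$i + inverse (z$i)) / 2)) :: real^'k)"
  have mA: "A \<in> borel_measurable \<pi>"
  proof (subst borel_measurable_euclidean_space, intro ballI)
    fix b :: "real^'k" assume "b \<in> Basis"
    then obtain i where b: "b = axis i 1" by (auto simp: Basis_vec_def)
    have m1: "(\<lambda>z::complex^'k. z$i) \<in> borel_measurable \<pi>" by (rule meas) (intro continuous_intros)
    have m2: "(\<lambda>z. z$i + inverse (z$i)) \<in> borel_measurable \<pi>"
      using m1 by (intro borel_measurable_add borel_measurable_inverse)
    have m3: "(\<lambda>w::complex. Re (w / 2)) \<in> borel_measurable borel"
      by (intro borel_measurable_continuous_onI continuous_intros) auto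
    have "(\<lambda>z. Re ((z$i + inverse (z$i)) / 2)) \<in> borel_measurable \<pi>"
      using measurable_compose[OF m2 m3] by simp
    then show "(\<lambda>z. A z \<bullet> b) \<in> borel_measurable \<pi>" by (simp add: A_def b inner_axis)
  qed
  have fbar_eq: "fbar \<theta> = integral\<^sup>L \<pi> (H \<theta>)" for \<theta>
  proof -
    have GA: "G_of G0 = (\<lambda>z. G0 (A z))" by (simp add: G_of_def A_def fun_eq_iff)
    have c2: "continuous_on UNIV (\<lambda>x. f \<theta> (G0 x))" by (rule continuous_on_compose2[OF cf cG0]) auto
    have mF: "(\<lambda>z. f \<theta> (G_of G0 z)) \<in> borel_measurable \<pi>"
      unfolding GA by (rule measurable_compose[OF mA borel_measurable_continuous_onI[OF c2]])
    have "fbar \<theta> = integral\<^sup>L \<pi> (\<lambda>z. f \<theta> (G_of G0 z))" unfolding fbar_def ..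
    also have "\<dots> = integral\<^sup>L \<pi> (H \<theta>)"
    proof (rule integral_cong_AE[OF mF meas[OF cH]])
      show "AE z in \<pi>. f \<theta> (G_of G0 z) = H \<theta> z"
        using AE_\<Omega>
      proof eventually_elim
        fix z assume "z \<in> clock_set \<omega> \<phi>"
        then have "z \<in> torus" using clock_set_torus by blast
        then show "f \<theta> (G_of G0 z) = H \<theta> z" using GG' unfolding G_def H_def by simp
      qed
    qed
    finally show ?thesis .
  qed
  have z0: "clock \<omega> \<phi> 0 \<in> \<Omega>" unfolding \<Omega>_def by (rule clock_set_nonempty)
  have key: "eventually (\<lambda>T. \<forall>\<theta>. \<forall>z\<in>\<Omega>. norm (avg (H \<theta>) T z - integral\<^sup>L \<pi> (H \<theta>)) \<le> e) at_top"
    if e: "e > 0" for e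
  proof -
    define \<delta> where "\<delta> = e / 4"
    define \<delta>1 where "\<delta>1 = \<delta> / (4 * (\<bar>L\<^sub>f\<bar> + 1))"
    define \<eta> where "\<eta> = \<delta> / (2 * real CARD('d))"
    have \<delta>0: "\<delta> > 0" using e by (simp add: \<delta>_def)
    have \<delta>10: "\<delta>1 > 0" using \<delta>0 by (simp add: \<delta>1_def add_pos_nonneg)
    have \<eta>0: "\<eta> > 0" using \<delta>0 by (simp add: \<eta>_def)
    define z0 where "z0 = clock \<omega> \<phi> 0"
    have z0\<Omega>: "z0 \<in> \<Omega>" using z0 by (simp add: z0_def)
    have cmp: "compact \<Omega>" unfolding \<Omega>_def by (rule compact_clock_set)
    have uc: "uniformly_continuous_on \<Omega> G'"
      by (rule compact_uniformly_continuous[OF continuous_on_subset[OF cG'] cmp]) simp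
    obtain r where r: "r > 0" "\<forall>x\<in>\<Omega>. \<forall>x'\<in>\<Omega>. dist x' x < r \<longrightarrow> dist (G' x') (G' x) < \<delta>1"
      using uc \<delta>10 unfolding uniformly_continuous_on_def by metis
    obtain N where N: "finite N" "N \<subseteq> \<Omega>" "\<Omega> \<subseteq> (\<Union>y\<in>N. ball y r)"
      using seq_compact_imp_totally_bounded[OF compact_imp_seq_compact[OF cmp]] r(1) by metis
    define g where "g = (\<lambda>\<theta> y. H \<theta> y - H \<theta> z0)"
    have gb: "norm (g \<theta> y) \<le> \<bar>L\<^sub>f\<bar> * norm (G' y - G' z0)" for \<theta> y
      unfolding g_def H_def by (rule Lip)
    define M where "M = (\<lambda>y. \<lceil>\<bar>L\<^sub>f\<bar> * norm (G' y - G' z0) / \<eta>\<rceil>)"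
    define q where "q = (\<lambda>\<theta>. restrict (\<lambda>y. (\<lambda>i. \<lfloor>(g \<theta> y)$i / \<eta>\<rfloor>)) N)"
    have qr: "q \<theta> \<in> PiE N (\<lambda>y. PiE (UNIV::'d set) (\<lambda>i. {-M y .. M y}))" for \<theta>
    proof -
      have "\<lfloor>(g \<theta> y)$i / \<eta>\<rfloor> \<in> {-M y .. M y}" for y i
      proof -
        define B where "B = \<bar>L\<^sub>f\<bar> * norm (G' y - G' z0) / \<eta>"
        have "\<bar>(g \<theta> y)$i\<bar> \<le> \<bar>L\<^sub>f\<bar> * norm (G' y - G' z0)"
          using component_le_norm_cart[of "g \<theta> y" i] gb[of \<theta> y] by linarith
        then have "\<bar>(g \<theta> y)$i / \<eta>\<bar> \<le> B"
          using \<eta>0 unfolding B_def by (simp add: abs_divide divide_right_mono)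
        then have x: "-B \<le> (g \<theta> y)$i / \<eta>" "(g \<theta> y)$i / \<eta> \<le> B" by linarith+
        have "\<lfloor>(g \<theta> y)$i / \<eta>\<rfloor> \<le> \<lfloor>B\<rfloor>" using x(2) by (rule floor_mono)
        also have "\<dots> \<le> \<lceil>B\<rceil>" by (rule floor_le_ceiling)
        finally have u: "\<lfloor>(g \<theta> y)$i / \<eta>\<rfloor> \<le> \<lceil>B\<rceil>" .
        have "-\<lceil>B\<rceil> = \<lfloor>-B\<rfloor>" by (simp add: floor_minus)
        also have "\<dots> \<le> \<lfloor>(g \<theta> y)$i / \<eta>\<rfloor>" using x(1) by (rule floor_mono)
        finally show ?thesis using u unfolding M_def B_def by simp
      qed
      then show ?thesis unfolding q_def by (simp add: restrict_PiE_iff PiE_iff)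
    qed
    have fin: "finite (range q)"
    proof (rule finite_subset)
      show "range q \<subseteq> PiE N (\<lambda>y. PiE (UNIV::'d set) (\<lambda>i. {-M y .. M y}))" using qr by blast
      show "finite (PiE N (\<lambda>y. PiE (UNIV::'d set) (\<lambda>i. {-M y .. M y})))"
        by (intro finite_PiE N(1) finite_atLeastAtMost_int) simp
    qed
    define rep where "rep = (\<lambda>p. SOME \<theta>. q \<theta> = p)"
    define \<Theta> where "\<Theta> = rep ` range q"
    have fin\<Theta>: "finite \<Theta>" using fin by (simp add: \<Theta>_def)
    have rep: "q (rep (q \<theta>)) = q \<theta>" for \<theta> unfolding rep_def by (rule someI_ex) blast
    have repin: "rep (q \<theta>) \<in> \<Theta>" for \<theta> unfolding \<Theta>_def by blast
    have close: "\<forall>z\<in>\<Omega>. norm (H \<theta> z - H \<theta>' z - (H \<theta> z0 - H \<theta>' z0)) \<le> 2 * \<bar>L\<^sub>f\<bar> * \<delta>1 + real CARD('d) * \<eta>"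
      if qq: "q \<theta>' = q \<theta>" for \<theta> \<theta>'
    proof
      fix z assume z: "z \<in> \<Omega>"
      obtain y where y: "y \<in> N" "dist y z < r" using N(3) z by auto
      have y\<Omega>: "y \<in> \<Omega>" using N(2) y(1) by blast
      have "dist z y < r" using y(2) by (simp add: dist_commute)
      then have "dist (G' z) (G' y) < \<delta>1" using r(2) z y\<Omega> by blast
      then have dG: "norm (G' z - G' y) \<le> \<delta>1" by (simp add: dist_norm)
      have h1: "norm (H t z - H t y) \<le> \<bar>L\<^sub>f\<bar> * \<delta>1" for t
      proof -
        have "norm (H t z - H t y) \<le> \<bar>L\<^sub>f\<bar> * norm (G' z - G' y)" unfolding H_def by (rule Lip)
        also have "\<dots> \<le> \<bar>L\<^sub>f\<bar> * \<delta>1" using dG by (intro mult_left_mono) auto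
        finally show ?thesis .
      qed
      have h3: "norm (g \<theta> y - g \<theta>' y) \<le> real CARD('d) * \<eta>"
      proof -
        have fl: "\<lfloor>(g \<theta> y)$i / \<eta>\<rfloor> = \<lfloor>(g \<theta>' y)$i / \<eta>\<rfloor>" for i
        proof -
          have "q \<theta>' y i = q \<theta> y i" using qq by simp
          then show ?thesis using y(1) by (simp add: q_def)
        qed
        have ci: "\<bar>(g \<theta> y - g \<theta>' y)$i\<bar> \<le> \<eta>" for i
        proof -
          define u where "u = (g \<theta> y)$i / \<eta>"
          define v where "v = (g \<theta>' y)$i / \<eta>"
          have "\<lfloor>u\<rfloor> = \<lfloor>v\<rfloor>" using fl unfolding u_def v_def .
          then have uv: "real_of_int \<lfloor>u\<rfloor> = real_of_int \<lfloor>v\<rfloor>" by simp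
          have fu: "real_of_int \<lfloor>u\<rfloor> \<le> u" "u < real_of_int \<lfloor>u\<rfloor> + 1"
            using floor_correct[of u] by simp_all
          have fv: "real_of_int \<lfloor>v\<rfloor> \<le> v" "v < real_of_int \<lfloor>v\<rfloor> + 1"
            using floor_correct[of v] by simp_all
          have "\<bar>u - v\<bar> < 1" using uv fu fv by arith
          then have "\<bar>u - v\<bar> * \<eta> \<le> 1 * \<eta>" using \<eta>0 by (intro mult_right_mono) auto
          moreover have "\<bar>u - v\<bar> * \<eta> = \<bar>(g \<theta> y - g \<theta>' y)$i\<bar>"
            using \<eta>0 unfolding u_def v_def by (simp add: diff_divide_distrib[symmetric] abs_divide)
          ultimately show ?thesis by simp
        qed
        have "norm (g \<theta> y - g \<theta>' y) \<le> (\<Sum>i\<in>UNIV. \<bar>(g \<theta> y - g \<theta>' y)$i\<bar>)" by (rule norm_le_l1_cart)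
        also have "\<dots> \<le> (\<Sum>i\<in>(UNIV::'d set). \<eta>)" by (intro sum_mono ci)
        also have "\<dots> = real CARD('d) * \<eta>" by simp
        finally show ?thesis .
      qed
      have eq: "H \<theta> z - H \<theta>' z - (H \<theta> z0 - H \<theta>' z0) = ((H \<theta> z - H \<theta> y) + (g \<theta> y - g \<theta>' y)) - (H \<theta>' z - H \<theta>' y)"
        by (simp add: g_def algebra_simps)
      have "norm (H \<theta> z - H \<theta>' z - (H \<theta> z0 - H \<theta>' z0)) \<le> (norm (H \<theta> z - H \<theta> y) + norm (g \<theta> y - g \<theta>' y)) + norm (H \<theta>' z - H \<theta>' y)"
      proof -
        have "norm (H \<theta> z - H \<theta>' z - (H \<theta> z0 - H \<theta>' z0)) \<le> norm ((H \<theta> z - H \<theta> y) + (g \<theta> y - g \<theta>' y)) + norm (H \<theta>' z - H \<theta>' y)"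
          unfolding eq by (rule norm_triangle_ineq4)
        also have "\<dots> \<le> (norm (H \<theta> z - H \<theta> y) + norm (g \<theta> y - g \<theta>' y)) + norm (H \<theta>' z - H \<theta>' y)"
          by (intro add_right_mono norm_triangle_ineq)
        finally show ?thesis .
      qed
      also have "\<dots> \<le> (\<bar>L\<^sub>f\<bar> * \<delta>1 + real CARD('d) * \<eta>) + \<bar>L\<^sub>f\<bar> * \<delta>1"
        using h1[of \<theta>] h1[of \<theta>'] h3 by (intro add_mono) auto
      also have "\<dots> = 2 * \<bar>L\<^sub>f\<bar> * \<delta>1 + real CARD('d) * \<eta>" by simp
      finally show "norm (H \<theta> z - H \<theta>' z - (H \<theta> z0 - H \<theta>' z0)) \<le> 2 * \<bar>L\<^sub>f\<bar> * \<delta>1 + real CARD('d) * \<eta>" .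
    qed
    have bnd: "2 * \<bar>L\<^sub>f\<bar> * \<delta>1 + real CARD('d) * \<eta> \<le> \<delta>"
    proof -
      have "2 * \<bar>L\<^sub>f\<bar> * \<delta>1 = \<delta> / 2 * (\<bar>L\<^sub>f\<bar> / (\<bar>L\<^sub>f\<bar> + 1))"
        unfolding \<delta>1_def by (simp add: field_simps)
      also have "\<dots> \<le> \<delta> / 2 * 1"
        using \<delta>0 by (intro mult_left_mono) (auto simp: divide_le_eq)
      finally have a: "2 * \<bar>L\<^sub>f\<bar> * \<delta>1 \<le> \<delta> / 2" by simp
      have b: "real CARD('d) * \<eta> = \<delta> / 2" unfolding \<eta>_def by simp
      show ?thesis using a b by simp
    qed
    have ev\<Theta>: "eventually (\<lambda>T. \<forall>\<theta>'\<in>\<Theta>. \<forall>z\<in>clock_set \<omega> \<phi>. norm (avg (H \<theta>') T z - integral\<^sup>L \<pi> (H \<theta>')) \<le> e / 2) at_top"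
    proof (rule eventually_ball_finite[OF fin\<Theta>], rule ballI)
      fix \<theta>' assume "\<theta>' \<in> \<Theta>"
      show "eventually (\<lambda>T. \<forall>z\<in>clock_set \<omega> \<phi>. norm (avg (H \<theta>') T z - integral\<^sup>L \<pi> (H \<theta>')) \<le> e / 2) at_top"
        using ETH[of \<theta>'] e unfolding ET_def by (meson half_gt_zero)
    qed
    show ?thesis
    proof (rule eventually_mono[OF eventually_conj[OF ev\<Theta> eventually_gt_at_top[of 0]]], intro allI ballI)
      fix T \<theta> z
      assume A: "(\<forall>\<theta>'\<in>\<Theta>. \<forall>z\<in>clock_set \<omega> \<phi>. norm (avg (H \<theta>') T z - integral\<^sup>L \<pi> (H \<theta>')) \<le> e / 2) \<and> 0 < T"
        and z: "z \<in> \<Omega>"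
      define \<theta>' where "\<theta>' = rep (q \<theta>)"
      have cl: "\<forall>z\<in>clock_set \<omega> \<phi>. norm (H \<theta> z - H \<theta>' z - (H \<theta> z0 - H \<theta>' z0)) \<le> \<delta>"
        using close[OF rep[of \<theta>, folded \<theta>'_def]] bnd unfolding \<Omega>_def by (meson order_trans)
      have z': "z \<in> clock_set \<omega> \<phi>" using z unfolding \<Omega>_def .
      have T: "T > 0" using A by blast
      have d: "norm ((avg (H \<theta>) T z - integral\<^sup>L \<pi> (H \<theta>)) - (avg (H \<theta>') T z - integral\<^sup>L \<pi> (H \<theta>'))) \<le> 2 * \<delta>"
        by (rule avg_close[OF cH cH cl T z'])
      have a: "norm (avg (H \<theta>') T z - integral\<^sup>L \<pi> (H \<theta>')) \<le> e / 2"
        using A z' repin[of \<theta>] unfolding \<theta>'_def by blast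
      have "norm (avg (H \<theta>) T z - integral\<^sup>L \<pi> (H \<theta>)) \<le>
          norm ((avg (H \<theta>) T z - integral\<^sup>L \<pi> (H \<theta>)) - (avg (H \<theta>') T z - integral\<^sup>L \<pi> (H \<theta>')))
          + norm (avg (H \<theta>') T z - integral\<^sup>L \<pi> (H \<theta>'))"
        using norm_triangle_sub[of "avg (H \<theta>) T z - integral\<^sup>L \<pi> (H \<theta>)" "avg (H \<theta>') T z - integral\<^sup>L \<pi> (H \<theta>')"]
        by linarith
      also have "\<dots> \<le> 2 * \<delta> + e / 2" using d a by (rule add_mono)
      also have "\<dots> = e" by (simp add: \<delta>_def)
      finally show "norm (avg (H \<theta>) T z - integral\<^sup>L \<pi> (H \<theta>)) \<le> e" .
    qed
  qed
  have rew: "(1 / T) *\<^sub>R integral {0..T} (\<lambda>t. f \<theta> (G (clock_flow \<omega> t z)) - fbar \<theta>)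
      = avg (H \<theta>) T z - integral\<^sup>L \<pi> (H \<theta>)" if "T > 0" "z \<in> \<Omega>" for T \<theta> z
  proof -
    have "integral {0..T} (\<lambda>t. f \<theta> (G (clock_flow \<omega> t z)) - fbar \<theta>) =
        integral {0..T} (\<lambda>t. H \<theta> (clock_flow \<omega> t z) - fbar \<theta>)"
    proof (rule integral_cong)
      fix t assume "t \<in> {0..T}"
      have "clock_flow \<omega> t z \<in> torus"
        using clock_flow_in[of z \<omega> \<phi> t] that(2) clock_set_torus[of \<omega> \<phi>] unfolding \<Omega>_def by blast
      then show "f \<theta> (G (clock_flow \<omega> t z)) - fbar \<theta> = H \<theta> (clock_flow \<omega> t z) - fbar \<theta>"
        by (simp add: GG' H_def)
    qed
    also have "\<dots> = integral {0..T} (\<lambda>t. H \<theta> (clock_flow \<omega> t z)) - integral {0..T} (\<lambda>t. fbar \<theta>)"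
      by (rule Henstock_Kurzweil_Integration.integral_diff[OF intg_t[OF cH] integrable_const_ivl])
    also have "integral {0..T} (\<lambda>t. fbar \<theta>) = T *\<^sub>R fbar \<theta>" using that by simp
    finally show ?thesis unfolding avg_def fbar_eq[symmetric] using that
      by (simp add: scaleR_diff_right)
  qed
  show ?thesis
  proof (rule ereal_sup_tendsto_0)
    show "(0, clock \<omega> \<phi> 0) \<in> (UNIV :: (real^'d) set) \<times> \<Omega>" using z0 by simp
    show "0 \<le> norm ((1 / T) *\<^sub>R integral {0..T} (\<lambda>t. f (fst p) (G (clock_flow \<omega> t (snd p))) - fbar (fst p)))
             / (1 + norm (fst p))" for T p by simp
    fix e :: real assume "e > 0"
    show "eventually (\<lambda>T. \<forall>p\<in>(UNIV :: (real^'d) set) \<times> \<Omega>.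
        norm ((1 / T) *\<^sub>R integral {0..T} (\<lambda>t. f (fst p) (G (clock_flow \<omega> t (snd p))) - fbar (fst p)))
             / (1 + norm (fst p)) \<le> e) at_top"
    proof (rule eventually_mono[OF eventually_conj[OF key[OF \<open>e > 0\<close>] eventually_gt_at_top[of 0]]], intro ballI)
      fix T p assume H1: "(\<forall>\<theta>. \<forall>z\<in>\<Omega>. norm (avg (H \<theta>) T z - integral\<^sup>L \<pi> (H \<theta>)) \<le> e) \<and> 0 < T"
        and p: "p \<in> (UNIV :: (real^'d) set) \<times> \<Omega>"
      obtain \<theta> z where pz: "p = (\<theta>, z)" and z: "z \<in> \<Omega>" using p by auto
      have T: "T > 0" using H1 by blast
      have n: "norm ((1 / T) *\<^sub>R integral {0..T} (\<lambda>t. f \<theta> (G (clock_flow \<omega> t z)) - fbar \<theta>)) \<le> e"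
        unfolding rew[OF T z] using H1 z by blast
      have "norm ((1 / T) *\<^sub>R integral {0..T} (\<lambda>t. f \<theta> (G (clock_flow \<omega> t z)) - fbar \<theta>)) / (1 + norm \<theta>)
          \<le> norm ((1 / T) *\<^sub>R integral {0..T} (\<lambda>t. f \<theta> (G (clock_flow \<omega> t z)) - fbar \<theta>)) / 1"
        by (rule divide_left_mono) (auto simp: add_pos_nonneg)
      also have "\<dots> \<le> e" using n by simp
      finally show "norm ((1 / T) *\<^sub>R integral {0..T} (\<lambda>t. f (fst p) (G (clock_flow \<omega> t (snd p))) - fbar (fst p)))
             / (1 + norm (fst p)) \<le> e" unfolding pz fst_conv snd_conv .
    qed
  qed
qed

end
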